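(* Let $a<0$, $I=(a,+\infty)$, and let $V\in C^2(I)$ satisfy $\lim_{u\to a^+}V(u)=h^*>0$, $\lim_{u\to a^+}V'(u)=-\infty$, $V(0)=V'(0)=0$, $V''(0)>0$, $uV'(u)>0$ for all $u\in I\setminus\{0\}$, and $V(u)\to+\infty$ as $u\to+\infty$. Let $\beta>0$ be the point with $V(\beta)=h^*$. Suppose there is $\ell>0$ such that $1-\frac{2V(u)V''(u)}{(V'(u))^2}\ge\ell$ for all sufficiently large $u$, that $u/V'(u)\to+\infty$ as $u\to+\infty$, and that $V''(u)>0$ for all $u>\beta$. Then there exists $\overline h>h^*$ such that the extended period function $T$ is monotone increasing on $(\overline h,+\infty)$.
   Context: For $h\in(0,h^* )$ let $a<u^-(h)<0<u^+(h)$ be the two solutions of $V(u)=h$; for $h\ge h^*$ let $u^+(h)>0$ be the positive solution of $V(u)=h$. Define $T_p(h)=\sqrt2\int_{u^-(h)}^{u^+(h)}\frac{du}{\sqrt{h-V(u)}}$ for $0<h<h^*$ and $T_b(h)=\sqrt2\int_{a}^{u^+(h)}\frac{du}{\sqrt{h-V(u)}}$ for $h\ge h^*$. The extended period function (of the equation $\ddot u+V'(u)=0$) is $T(h)=T_p(h)$ for $0<h<h^*$ and $T(h)=T_b(h)$ for $h\ge h^*$. *)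

theory Defs
  imports "HOL-Analysis.Analysis"
begin

definition u_plus :: "(real \<Rightarrow> real) \<Rightarrow> real \<Rightarrow> real" where
  "u_plus V h = (THE u. 0 < u \<and> V u = h)"

definition u_minus :: "real \<Rightarrow> (real \<Rightarrow> real) \<Rightarrow> real \<Rightarrow> real" where
  "u_minus a V h = (THE u. a < u \<and> u < 0 \<and> V u = h)"

definition T_p :: "real \<Rightarrow> (real \<Rightarrow> real) \<Rightarrow> real \<Rightarrow> real" where
  "T_p a V h = sqrt 2 * integral {u_minus a V h .. u_plus V h} (\<lambda>u. 1 / sqrt (h - V u))"

definition T_b :: "real \<Rightarrow> (real \<Rightarrow> real) \<Rightarrow> real \<Rightarrow> real" where
  "T_b a V h = sqrt 2 * integral {a .. u_plus V h} (\<lambda>u. 1 / sqrt (h - V u))"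

definition ext_period :: "real \<Rightarrow> real \<Rightarrow> (real \<Rightarrow> real) \<Rightarrow> real \<Rightarrow> real" where
  "ext_period a hstar V h = (if h < hstar then T_p a V h else T_b a V h)"

end

theory Submission
  imports Defs
begin


locale pot =
  fixes V V' V'' :: "real \<Rightarrow> real" and a hstar :: real
  assumes a_neg: "a < 0"
    and V_deriv: "\<And>u. a < u \<Longrightarrow> (V has_real_derivative V' u) (at u)"
    and V'_deriv: "\<And>u. a < u \<Longrightarrow> (V' has_real_derivative V'' u) (at u)"
    and lim_V_a: "(V \<longlongrightarrow> hstar) (at_right a)"
    and hstar_pos: "hstar > 0"
    and V0: "V 0 = 0"
    and sign: "\<And>u. a < u \<Longrightarrow> u \<noteq> 0 \<Longrightarrow> u * V' u > 0"
    and V_infty: "filterlim V at_top at_top"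
begin

lemma isCont_V: "a < x \<Longrightarrow> isCont V x"
  using V_deriv DERIV_isCont by blast

lemma isCont_V': "a < x \<Longrightarrow> isCont V' x"
  using V'_deriv DERIV_isCont by blast

lemma V'_pos: "0 < x \<Longrightarrow> V' x > 0"
  using sign[of x] a_neg by (simp add: zero_less_mult_iff)

lemma V'_neg: "a < x \<Longrightarrow> x < 0 \<Longrightarrow> V' x < 0"
  using sign[of x] by (simp add: zero_less_mult_iff)

lemma V_strict: assumes "0 \<le> x" "x < y" shows "V x < V y"
proof (rule DERIV_pos_imp_increasing_open[OF assms(2)])
  fix t assume "x < t" "t < y"
  then show "\<exists>d. DERIV V t :> d \<and> d > 0"
    using V_deriv[of t] V'_pos[of t] assms a_neg by auto
next
  show "continuous_on {x..y} V"
    using isCont_V assms a_neg by (intro continuous_at_imp_continuous_on) auto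
qed

lemma V_pos: "0 < x \<Longrightarrow> 0 < V x"
  using V_strict[of 0 x] V0 by simp

lemma V_anti: assumes "a < x" "x < y" "y \<le> 0" shows "V y < V x"
proof -
  have "(\<lambda>t. - V t) x < (\<lambda>t. - V t) y"
  proof (rule DERIV_pos_imp_increasing_open[OF assms(2)])
    fix t assume "x < t" "t < y"
    then show "\<exists>d. DERIV (\<lambda>t. - V t) t :> d \<and> d > 0"
      using V_deriv[of t] V'_neg[of t] assms
      by (intro exI[of _ "- V' t"]) (auto intro!: derivative_eq_intros)
  next
    show "continuous_on {x..y} (\<lambda>t. - V t)"
      using isCont_V assms by (intro continuous_at_imp_continuous_on continuous_intros) auto
  qed
  then show ?thesis by simp
qed

lemma V_le_hstar: assumes "a < x" "x \<le> 0" shows "V x \<le> hstar"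
proof -
  have ev: "eventually (\<lambda>t. t \<in> {a<..<x}) (at_right a)"
    by (rule eventually_at_right_real[OF assms(1)])
  have "eventually (\<lambda>t. V x \<le> V t) (at_right a)"
  proof (rule eventually_mono[OF ev])
    fix t assume "t \<in> {a<..<x}"
    then have "a < t" "t < x" by auto
    then show "V x \<le> V t" using V_anti[of t x] assms(2) by simp
  qed
  moreover have "\<not> trivial_limit (at_right a)" by simp
  ultimately show ?thesis by (rule tendsto_lowerbound[OF lim_V_a])
qed

lemma uplus_ex: assumes "v > 0" shows "\<exists>u>0. V u = v"
proof -
  have "eventually (\<lambda>x. v \<le> V x) at_top"
    using V_infty unfolding filterlim_at_top by blast
  then obtain b where b: "\<forall>x\<ge>b. v \<le> V x"
    unfolding eventually_at_top_linorder by blast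
  define b' where "b' = max b 1"
  have "V b' \<ge> v" using b b'_def by simp
  have c: "\<forall>x. 0 \<le> x \<and> x \<le> b' \<longrightarrow> isCont V x" using isCont_V a_neg by auto
  have "0 \<le> b'" using b'_def by simp
  have "\<exists>x\<ge>0. x \<le> b' \<and> V x = v"
    by (rule IVT[OF _ \<open>V b' \<ge> v\<close> \<open>0 \<le> b'\<close> c]) (use V0 assms in simp)
  then obtain x where x: "0 \<le> x" "x \<le> b'" "V x = v" by blast
  have "x \<noteq> 0" using x V0 assms by auto
  then have "x > 0" using x by simp
  then show ?thesis using x by blast
qed

lemma V_inj: assumes "0 \<le> x" "0 \<le> y" "V x = V y" shows "x = y"
proof (rule ccontr)
  assume "x \<noteq> y"
  then consider "x < y" | "y < x" by linarith
  then show False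
  proof cases
    case 1 then show False using V_strict[OF assms(1) 1] assms(3) by simp
  next
    case 2 then show False using V_strict[OF assms(2) 2] assms(3) by simp
  qed
qed

lemma uplus: assumes "v > 0" shows "u_plus V v > 0" "V (u_plus V v) = v"
proof -
  obtain u where u: "u > 0" "V u = v" using uplus_ex assms by blast
  have uniq: "w = u" if "0 < w \<and> V w = v" for w
    using V_inj[of w u] that u by simp
  have "u_plus V v = u" unfolding u_plus_def
  proof (rule the_equality)
    show "0 < u \<and> V u = v" using u by simp
  qed (rule uniq)
  then show "u_plus V v > 0" "V (u_plus V v) = v" using u by auto
qed

lemma uplus_V: assumes "x > 0" shows "u_plus V (V x) = x"
proof -
  have vx: "V x > 0" using V_pos[OF assms] .
  have "V (u_plus V (V x)) = V x" "u_plus V (V x) > 0" using uplus[OF vx] by auto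
  then show ?thesis using V_inj[of "u_plus V (V x)" x] assms by simp
qed

lemma uplus_mono: assumes "0 < v" "v \<le> w" shows "u_plus V v \<le> u_plus V w"
proof (rule ccontr)
  assume "\<not> u_plus V v \<le> u_plus V w"
  then have lt: "u_plus V w < u_plus V v" by simp
  have w: "w > 0" using assms by simp
  have "V (u_plus V w) < V (u_plus V v)" using V_strict[OF _ lt] uplus(1)[OF w] by simp
  then show False using uplus(2)[OF assms(1)] uplus(2)[OF w] assms by simp
qed

lemma uplus_isCont: assumes "v > 0" shows "isCont (u_plus V) v"
proof -
  let ?x = "u_plus V v"
  have x: "?x > 0" "V ?x = v" using uplus assms by auto
  have "isCont (u_plus V) (V ?x)"
  proof (rule isCont_inverse_function[where d="?x/2" and f=V and x="?x"])
    fix z assume "\<bar>z - ?x\<bar> \<le> ?x/2"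
    then have z: "z > 0" using x by arith
    show "u_plus V (V z) = z" using uplus_V z .
    show "isCont V z" using isCont_V z a_neg by simp
  qed (use x in simp)
  then show ?thesis using x by simp
qed

lemma uplus_deriv: assumes "v > 0"
  shows "(u_plus V has_real_derivative inverse (V' (u_plus V v))) (at v)"
proof (rule DERIV_inverse_function[where a=0 and b="v+1"])
  show "DERIV V (u_plus V v) :> V' (u_plus V v)" using V_deriv uplus assms a_neg by force
  show "V' (u_plus V v) \<noteq> 0" using V'_pos uplus assms by force
  show "\<And>y. 0 < y \<Longrightarrow> y < v + 1 \<Longrightarrow> V (u_plus V y) = y" using uplus by auto
  show "isCont (u_plus V) v" using uplus_isCont assms .
qed (use assms in auto)

end



lemma Gd_alg:
  fixes p q s l :: real
  assumes p: "p > 0" and s: "s > 0" and X: "1 - 2 * s^2 * q / p^2 \<ge> l"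
  shows "(inverse s / 2 * p - s * (q * inverse p)) / (p * p) \<ge> (l / (2 * s^2)) * (s / p)"
proof -
  have eq: "(inverse s / 2 * p - s * (q * inverse p)) / (p * p) = (1 / (2 * s * p)) * (1 - 2 * s^2 * q / p^2)"
    using p s by (simp add: field_simps power2_eq_square)
  have eq2: "(l / (2 * s^2)) * (s / p) = (1 / (2 * s * p)) * l"
    using p s by (simp add: field_simps power2_eq_square)
  have "(1 / (2 * s * p)) * l \<le> (1 / (2 * s * p)) * (1 - 2 * s^2 * q / p^2)"
    using X p s by (intro mult_left_mono) auto
  then show ?thesis using eq eq2 by simp
qed

locale pot2 = pot +
  fixes l U :: real
  assumes l_pos: "l > 0" and U_ge: "U \<ge> 1"
    and ellU: "\<And>u. u \<ge> U \<Longrightarrow> 1 - 2 * V u * V'' u / (V' u)^2 \<ge> l"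
begin

definition "V0 = V U"
definition Gf :: "real \<Rightarrow> real" where "Gf v = sqrt v / V' (u_plus V v)"
definition Gd :: "real \<Rightarrow> real" where
  "Gd v = (inverse (sqrt v) / 2 * V' (u_plus V v) - sqrt v * (V'' (u_plus V v) * inverse (V' (u_plus V v))))
          / (V' (u_plus V v) * V' (u_plus V v))"

lemma V0_pos: "V0 > 0" using V_pos U_ge unfolding V0_def by simp

lemma uplus_V0: "u_plus V V0 = U" unfolding V0_def using uplus_V U_ge by simp

lemma uplus_ge_U: "v \<ge> V0 \<Longrightarrow> u_plus V v \<ge> U"
  using uplus_mono[OF V0_pos] uplus_V0 by metis

lemma Gf_deriv: assumes "v > 0" shows "(Gf has_real_derivative Gd v) (at v)"
proof -
  let ?u = "u_plus V v"
  have u: "?u > 0" "V ?u = v" using uplus assms by auto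
  have d1: "((\<lambda>v. V' (u_plus V v)) has_real_derivative V'' ?u * inverse (V' ?u)) (at v)"
    by (rule DERIV_chain2[OF V'_deriv uplus_deriv[OF assms]]) (use u a_neg in simp)
  have d2: "(sqrt has_real_derivative inverse (sqrt v) / 2) (at v)"
    using DERIV_real_sqrt[OF assms] .
  have "((\<lambda>v. sqrt v / V' (u_plus V v)) has_real_derivative Gd v) (at v)"
    unfolding Gd_def using DERIV_divide[OF d2 d1] V'_pos[OF u(1)] by simp
  then show ?thesis unfolding Gf_def[abs_def] .
qed

lemma Gf_pos: "v > 0 \<Longrightarrow> Gf v > 0"
  unfolding Gf_def using uplus V'_pos by simp

lemma Gd_lower: assumes "v \<ge> V0" shows "Gd v \<ge> (l / (2 * v)) * Gf v"
proof -
  let ?u = "u_plus V v"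
  have v: "v > 0" using assms V0_pos by simp
  have u: "?u > 0" "V ?u = v" using uplus v by auto
  have uU: "?u \<ge> U" using uplus_ge_U assms .
  have X: "1 - 2 * (sqrt v)^2 * V'' ?u / (V' ?u)^2 \<ge> l"
    using ellU[OF uU] u v by simp
  have "Gd v \<ge> (l / (2 * (sqrt v)^2)) * (sqrt v / V' ?u)"
    unfolding Gd_def by (rule Gd_alg[OF V'_pos[OF u(1)] _ X]) (use v in simp)
  then show ?thesis unfolding Gf_def using v by simp
qed

lemma Gd_nonneg: "v \<ge> V0 \<Longrightarrow> Gd v \<ge> 0"
proof -
  assume v: "v \<ge> V0"
  then have "v > 0" using V0_pos by simp
  then have "Gf v > 0" using Gf_pos by simp
  then have "(l / (2 * v)) * Gf v \<ge> 0" using l_pos \<open>v > 0\<close> by (intro mult_nonneg_nonneg) auto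
  then show ?thesis using Gd_lower[OF v] by linarith
qed

lemma Gf_mono: assumes "V0 \<le> v1" "v1 \<le> v2" shows "Gf v1 \<le> Gf v2"
proof (rule deriv_nonneg_imp_mono[where g = Gf and g' = Gd and a = v1 and b = v2])
  fix x assume "x \<in> {v1..v2}"
  then have x: "x \<ge> V0" using assms by simp
  then show "(Gf has_real_derivative Gd x) (at x)" using Gf_deriv V0_pos by simp
next
  fix x assume "x \<in> {v1..v2}"
  then have x: "x \<ge> V0" using assms by simp
  show "Gd x \<ge> 0" using Gd_nonneg[OF x] .
qed (use assms in simp)

definition "c0 = l * Gf V0 / 2"

lemma c0_pos: "c0 > 0" unfolding c0_def using l_pos Gf_pos[OF V0_pos] by simp

lemma E_mono: assumes "V0 \<le> v1" "v1 \<le> v2"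
  shows "Gf v2 - Gf v1 \<ge> c0 * (ln v2 - ln v1)"
proof -
  have "(\<lambda>v. Gf v - c0 * ln v) v1 \<le> (\<lambda>v. Gf v - c0 * ln v) v2"
  proof (rule deriv_nonneg_imp_mono[where g = "\<lambda>v. Gf v - c0 * ln v" and g' = "\<lambda>v. Gd v - c0 * inverse v" and a = v1 and b = v2])
    fix x assume "x \<in> {v1..v2}"
    then have x: "x \<ge> V0" using assms by simp
    then have xp: "x > 0" using V0_pos by simp
    show "((\<lambda>v. Gf v - c0 * ln v) has_real_derivative Gd x - c0 * inverse x) (at x)"
      using Gf_deriv[OF xp] xp by (auto intro!: derivative_eq_intros simp: divide_inverse)
  next
    fix x assume "x \<in> {v1..v2}"
    then have x: "x \<ge> V0" using assms by simp
    then have xp: "x > 0" using V0_pos by simp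
    have "Gf x \<ge> Gf V0" using Gf_mono[OF _ x] by simp
    then have "(l / (2 * x)) * Gf x \<ge> (l / (2 * x)) * Gf V0"
      using l_pos xp by (intro mult_left_mono) auto
    moreover have "(l / (2 * x)) * Gf V0 = c0 * inverse x"
      unfolding c0_def using xp by (simp add: field_simps)
    ultimately show "Gd x - c0 * inverse x \<ge> 0" using Gd_lower[OF x] by linarith
  qed (use assms in simp)
  then show ?thesis by (simp add: algebra_simps)
qed

end



lemma subst_alg:
  fixes h x p :: real
  assumes "h > 0" "x < 0" "p > 0"
  shows "1 / sqrt (h * x^2) * (inverse p * (- (2 * h * x))) = 2 * sqrt h / p"
proof -
  have "sqrt (h * x^2) = sqrt h * (- x)"
    using assms by (simp add: real_sqrt_mult)
  moreover have "sqrt h * sqrt h = h" using assms by simp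
  ultimately show ?thesis using assms
    by (simp add: field_simps)
qed

context pot
begin

definition W :: "real \<Rightarrow> real" where "W x = (if x \<le> a then hstar else V x)"

lemma W_isCont: "isCont W x"
proof -
  consider "x < a" | "x > a" | "x = a" by linarith
  then show ?thesis
  proof cases
    case 1
    have "eventually (\<lambda>y. y \<in> {..<a}) (nhds x)" using 1 by (intro eventually_nhds_in_open) auto
    then have "eventually (\<lambda>y. W y = hstar) (nhds x)" by (rule eventually_mono) (auto simp: W_def)
    then have "isCont W x \<longleftrightarrow> isCont (\<lambda>_. hstar) x" by (rule isCont_cong)
    then show ?thesis by simp
  next
    case 2
    have "eventually (\<lambda>y. y \<in> {a<..}) (nhds x)" using 2 by (intro eventually_nhds_in_open) auto
    then have "eventually (\<lambda>y. W y = V y) (nhds x)" by (rule eventually_mono) (auto simp: W_def)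
    then have "isCont W x \<longleftrightarrow> isCont V x" by (rule isCont_cong)
    then show ?thesis using isCont_V 2 by simp
  next
    case 3
    have l: "continuous (at_left a) W"
    proof -
      have "eventually (\<lambda>y. W y = hstar) (at_left a)"
      proof -
        have e: "eventually (\<lambda>x. x \<in> {a - 1<..<a}) (at_left a)" by (rule eventually_at_left_real) simp
        show ?thesis by (rule eventually_mono[OF e]) (auto simp: W_def)
      qed
      then have "(W \<longlongrightarrow> hstar) (at_left a)" by (simp add: tendsto_cong)
      then show ?thesis unfolding continuous_within by (simp add: W_def)
    qed
    have r: "continuous (at_right a) W"
    proof -
      have "eventually (\<lambda>y. W y = V y) (at_right a)"
        by (auto simp: W_def intro: eventually_mono[OF eventually_at_right_less])
      then have "(W \<longlongrightarrow> hstar) (at_right a)" using lim_V_a by (simp add: tendsto_cong)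
      then show ?thesis unfolding continuous_within by (simp add: W_def)
    qed
    show ?thesis using continuous_at_split l r 3 by blast
  qed
qed

lemma W_cont: "continuous_on S W"
  using W_isCont by (simp add: continuous_at_imp_continuous_on)

lemma W_meas[measurable]: "W \<in> borel_measurable borel"
  using W_cont by (rule borel_measurable_continuous_onI)

lemma W_eq: "x > a \<Longrightarrow> W x = V x" by (simp add: W_def)

lemma W_le: assumes "x \<le> 0" shows "W x \<le> hstar"
  using V_le_hstar assms by (auto simp: W_def)

end

context pot2
begin

definition gs :: "real \<Rightarrow> real \<Rightarrow> real" where "gs h s = u_plus V (h * (1 - s^2))"
definition gd :: "real \<Rightarrow> real \<Rightarrow> real" where "gd h s = inverse (V' (gs h s)) * (- (2 * h * s))"
definition ws :: "real \<Rightarrow> real \<Rightarrow> real" where "ws h s = 2 * sqrt h / V' (gs h s)"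
definition rho :: "real \<Rightarrow> real" where "rho h = sqrt (1 - V0 / h)"

lemma arg_bounds:
  assumes h: "h > V0" and s: "s \<in> {- rho h..0}"
  shows "h * (1 - s^2) \<ge> V0" "h * (1 - s^2) \<le> h"
proof -
  have hp: "h > 0" using h V0_pos by simp
  have "\<bar>s\<bar> \<le> rho h" using s by auto
  then have "s^2 \<le> (rho h)^2" by (metis abs_ge_zero power2_abs power_mono)
  also have "(rho h)^2 = 1 - V0 / h" unfolding rho_def using h hp by (simp add: field_simps)
  finally have "h * s^2 \<le> h * (1 - V0/h)" using hp by (simp add: mult_left_mono)
  then show "h * (1 - s^2) \<ge> V0" using hp by (simp add: algebra_simps)
  show "h * (1 - s^2) \<le> h" using hp by (simp add: algebra_simps)
qed

lemma gs_deriv: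
  assumes h: "h > V0" and s: "s \<in> {- rho h..0}"
  shows "(gs h has_real_derivative gd h s) (at s)"
proof -
  have v: "h * (1 - s^2) > 0" using arg_bounds[OF h s] V0_pos by simp
  have d: "((\<lambda>s. h * (1 - s^2)) has_real_derivative - (2 * h * s)) (at s)"
    by (auto intro!: derivative_eq_intros)
  show ?thesis unfolding gs_def[abs_def] gd_def gs_def
    by (rule DERIV_chain2[OF uplus_deriv[OF v] d])
qed

lemma gs_pos: assumes h: "h > V0" and s: "s \<in> {- rho h..0}" shows "gs h s > 0"
  using arg_bounds[OF h s] V0_pos uplus unfolding gs_def by simp

lemma gd_cont:
  assumes h: "h > V0"
  shows "continuous_on {- rho h..0} (gd h)"
proof (rule continuous_at_imp_continuous_on, intro ballI)
  fix s assume s: "s \<in> {- rho h..0}"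
  have v: "h * (1 - s^2) > 0" using arg_bounds[OF h s] V0_pos by simp
  have c0: "isCont (\<lambda>s. h * (1 - s^2)) s" by (intro continuous_intros)
  have c1: "isCont (\<lambda>s. gs h s) s" unfolding gs_def
    by (rule isCont_o2[OF c0]) (use uplus_isCont[OF v] in simp)
  have c2: "isCont (\<lambda>s. V' (gs h s)) s"
    by (rule isCont_o2[OF c1 isCont_V']) (use gs_pos[OF h s] a_neg in simp)
  have "V' (gs h s) \<noteq> 0" using V'_pos gs_pos[OF h s] by force
  then show "isCont (gd h) s" unfolding gd_def[abs_def]
    by (intro continuous_intros c2)
qed

lemma ws_cont:
  assumes h: "h > V0"
  shows "continuous_on {- rho h..0} (ws h)"
proof (rule continuous_at_imp_continuous_on, intro ballI)
  fix s assume s: "s \<in> {- rho h..0}"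
  have v: "h * (1 - s^2) > 0" using arg_bounds[OF h s] V0_pos by simp
  have c0: "isCont (\<lambda>s. h * (1 - s^2)) s" by (intro continuous_intros)
  have c1: "isCont (\<lambda>s. gs h s) s" unfolding gs_def
    by (rule isCont_o2[OF c0]) (use uplus_isCont[OF v] in simp)
  have c2: "isCont (\<lambda>s. V' (gs h s)) s"
    by (rule isCont_o2[OF c1 isCont_V']) (use gs_pos[OF h s] a_neg in simp)
  have "V' (gs h s) \<noteq> 0" using V'_pos gs_pos[OF h s] by force
  then show "isCont (ws h) s" unfolding ws_def[abs_def]
    by (intro continuous_intros c2)
qed

lemma ws_nonneg: assumes h: "h > V0" and s: "s \<in> {- rho h..0}" shows "ws h s \<ge> 0"
  unfolding ws_def using V'_pos[OF gs_pos[OF h s]] h V0_pos by simp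

lemma rho_pos: "h > V0 \<Longrightarrow> rho h > 0"
  unfolding rho_def using V0_pos by (simp add: field_simps)

lemma piece2:
  assumes h: "h > V0"
  shows "((\<lambda>x. 1 / sqrt (h - W x)) has_integral integral {- rho h..0} (ws h)) {U..u_plus V h}"
proof -
  have hp: "h > 0" using h V0_pos by simp
  define F where "F = (\<lambda>x. 1 / sqrt (h - W x))"
  define X where "X = integral {- rho h..0} (ws h)"
  have Fm[measurable]: "F \<in> borel_measurable borel" unfolding F_def by measurable
  have r: "- rho h \<le> 0" using rho_pos[OF h] by simp
  have ga: "gs h (- rho h) = U"
  proof -
    have "h * (1 - (- rho h)^2) = V0"
      unfolding rho_def using h hp by (simp add: field_simps)
    then show ?thesis unfolding gs_def using uplus_V0 by simp
  qed
  have gb: "gs h 0 = u_plus V h" unfolding gs_def by simp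
  have sub: "(\<integral>\<^sup>+x. F x * indicator {gs h (- rho h)..gs h 0} x \<partial>lborel) =
             (\<integral>\<^sup>+x. F (gs h x) * gd h x * indicator {- rho h..0} x \<partial>lborel)"
  proof (rule nn_integral_substitution)
    show "set_borel_measurable borel {gs h (- rho h)..gs h 0} F"
      unfolding set_borel_measurable_def by measurable
    show "\<And>x. x \<in> {- rho h..0} \<Longrightarrow> (gs h has_real_derivative gd h x) (at x)"
      using gs_deriv[OF h] by blast
    show "continuous_on {- rho h..0} (gd h)" using gd_cont[OF h] .
    show "\<And>x. x \<in> {- rho h..0} \<Longrightarrow> gd h x \<ge> 0"
    proof -
      fix x assume x: "x \<in> {- rho h..0}"
      have "V' (gs h x) > 0" using V'_pos gs_pos[OF h x] by simp
      moreover have "h * x \<le> 0" using x hp by (simp add: mult_nonneg_nonpos)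
      ultimately show "gd h x \<ge> 0" unfolding gd_def
        by (intro mult_nonneg_nonneg) auto
    qed
  qed (rule r)
  have ae: "AE x in lborel. ennreal (F (gs h x) * gd h x * indicator {- rho h..0} x)
                = ennreal (ws h x) * indicator {- rho h..0} x"
  proof (rule eventually_mono[OF AE_lborel_singleton[of 0]])
    fix x :: real assume x0: "x \<noteq> 0"
    show "ennreal (F (gs h x) * gd h x * indicator {- rho h..0} x) = ennreal (ws h x) * indicator {- rho h..0} x"
    proof (cases "x \<in> {- rho h..0}")
      case True
      then have xn: "x < 0" using x0 by auto
      have gp: "gs h x > 0" using gs_pos[OF h True] .
      have Vg: "V (gs h x) = h * (1 - x^2)"
        unfolding gs_def using uplus arg_bounds[OF h True] V0_pos by simp
      have "W (gs h x) = h * (1 - x^2)" using W_eq[of "gs h x"] gp a_neg Vg by simp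
      then have "h - W (gs h x) = h * x^2" by (simp add: algebra_simps)
      then have "F (gs h x) * gd h x = ws h x"
        unfolding F_def gd_def ws_def using subst_alg[OF hp xn V'_pos[OF gp]] by simp
      then show ?thesis using True by simp
    next
      case False
      then show ?thesis by simp
    qed
  qed
  have wi: "(ws h has_integral X) {- rho h..0}"
    unfolding X_def using ws_cont[OF h] by (intro integrable_integral integrable_continuous_interval)
  have "(\<integral>\<^sup>+x. ennreal (ws h x) * indicator {- rho h..0} x \<partial>lborel) = ennreal X"
    by (rule nn_integral_has_integral_lebesgue'[OF _ wi]) (use ws_nonneg[OF h] in blast)
  with sub ae have nn: "(\<integral>\<^sup>+x. F x * indicator {U..u_plus V h} x \<partial>lborel) = ennreal X"
    using ga gb by (simp add: nn_integral_cong_AE)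
  have X0: "X \<ge> 0" unfolding X_def
    by (rule integral_nonneg[OF integrable_continuous_interval[OF ws_cont[OF h]]]) (use ws_nonneg[OF h] in blast)
  have Fnn: "F x * indicator {U..u_plus V h} x \<ge> 0" for x
  proof (cases "x \<in> {U..u_plus V h}")
    case True
    then have xp: "x > 0" using U_ge by simp
    have "V x \<le> h"
    proof (cases "x < u_plus V h")
      case True then show ?thesis using V_strict[of x "u_plus V h"] xp uplus[OF hp] by simp
    next
      case False then have "x = u_plus V h" using \<open>x \<in> {U..u_plus V h}\<close> by simp
      then show ?thesis using uplus[OF hp] by simp
    qed
    then have "W x \<le> h" using W_eq[of x] xp a_neg by simp
    then show ?thesis using True unfolding F_def by simp
  qed simp
  have "((\<lambda>x. F x * indicator {U..u_plus V h} x) has_integral X) UNIV"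
    by (rule nn_integral_has_integral[OF _ Fnn nn X0]) measurable
  moreover have "(\<lambda>x. F x * indicator {U..u_plus V h} x) = (\<lambda>x. if x \<in> {U..u_plus V h} then F x else 0)"
    by (auto simp: indicator_def)
  ultimately have "(F has_integral X) {U..u_plus V h}"
    using has_integral_restrict_UNIV by metis
  then show ?thesis unfolding F_def X_def .
qed

end



lemma inv_sqrt_diff:
  fixes A d :: real
  assumes "A > 0" "d \<ge> 0"
  shows "1 / sqrt A - 1 / sqrt (A + d) = d / (sqrt A * sqrt (A + d) * (sqrt A + sqrt (A + d)))"
proof -
  define p where "p = sqrt A"
  define q where "q = sqrt (A + d)"
  have p: "p > 0" and q: "q > 0" using assms by (auto simp: p_def q_def)
  have pp: "p * p = A" and qq: "q * q = A + d" using assms by (auto simp: p_def q_def)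
  have "(q - p) * (p + q) = d" using pp qq by (simp add: algebra_simps)
  then have qp: "q - p = d / (p + q)" using p q by (simp add: eq_divide_eq)
  have "1 / p - 1 / q = (q - p) / (p * q)" using p q by (simp add: field_simps)
  also have "\<dots> = (d / (p + q)) / (p * q)" by (simp only: qp)
  also have "\<dots> = d / (p * q * (p + q))" by (simp add: divide_divide_eq_left mult_ac)
  finally have "1 / p - 1 / q = d / (p * q * (p + q))" .
  then show ?thesis by (simp add: p_def q_def)
qed

lemma pointwise1:
  fixes x M h1 h2 :: real
  assumes "x \<le> M" "M < h1" "h1 \<le> h2"
  shows "1 / sqrt (h1 - x) - 1 / sqrt (h2 - x) \<le> 1 / sqrt (h1 - M) - 1 / sqrt (h2 - M)"
proof -
  define d where "d = h2 - h1"
  have d: "d \<ge> 0" using assms by (simp add: d_def)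
  have A: "h1 - x > 0" "h1 - M > 0" using assms by auto
  have e1: "1 / sqrt (h1 - x) - 1 / sqrt (h2 - x) = d / (sqrt (h1 - x) * sqrt (h1 - x + d) * (sqrt (h1 - x) + sqrt (h1 - x + d)))"
    using inv_sqrt_diff[OF A(1) d] by (simp add: d_def)
  have e2: "1 / sqrt (h1 - M) - 1 / sqrt (h2 - M) = d / (sqrt (h1 - M) * sqrt (h1 - M + d) * (sqrt (h1 - M) + sqrt (h1 - M + d)))"
    using inv_sqrt_diff[OF A(2) d] by (simp add: d_def)
  have s1: "sqrt (h1 - M) \<le> sqrt (h1 - x)" "sqrt (h1 - M + d) \<le> sqrt (h1 - x + d)"
    using assms by auto
  have pos: "sqrt (h1 - M) > 0" "sqrt (h1 - M + d) > 0" using A d by auto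
  have "sqrt (h1 - M) * sqrt (h1 - M + d) \<le> sqrt (h1 - x) * sqrt (h1 - x + d)"
    using s1 pos by (intro mult_mono) auto
  then have den: "sqrt (h1 - M) * sqrt (h1 - M + d) * (sqrt (h1 - M) + sqrt (h1 - M + d))
      \<le> sqrt (h1 - x) * sqrt (h1 - x + d) * (sqrt (h1 - x) + sqrt (h1 - x + d))"
    using s1 pos by (intro mult_mono add_mono) auto
  have "d / (sqrt (h1 - x) * sqrt (h1 - x + d) * (sqrt (h1 - x) + sqrt (h1 - x + d)))
      \<le> d / (sqrt (h1 - M) * sqrt (h1 - M + d) * (sqrt (h1 - M) + sqrt (h1 - M + d)))"
  proof (rule divide_left_mono[OF den])
    have P1: "sqrt (h1 - M) * sqrt (h1 - M + d) * (sqrt (h1 - M) + sqrt (h1 - M + d)) > 0"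
      using pos by (intro mult_pos_pos add_pos_pos) auto
    then have P2: "sqrt (h1 - x) * sqrt (h1 - x + d) * (sqrt (h1 - x) + sqrt (h1 - x + d)) > 0"
      using den by linarith
    show "0 < sqrt (h1 - x) * sqrt (h1 - x + d) * (sqrt (h1 - x) + sqrt (h1 - x + d)) *
       (sqrt (h1 - M) * sqrt (h1 - M + d) * (sqrt (h1 - M) + sqrt (h1 - M + d)))"
      by (rule mult_pos_pos[OF P2 P1])
  qed (use d in simp)
  then show ?thesis using e1 e2 by simp
qed

lemma final_ineq:
  fixes M c L h1 h2 :: real
  assumes M: "M > 0" and c: "c > 0" and L: "L > 0"
    and h1: "h1 \<ge> 2 * M" "h1 - M \<ge> (2 * L / c)^2" and h12: "h1 \<le> h2"
  shows "L * (1 / sqrt (h1 - M) - 1 / sqrt (h2 - M)) \<le> c * (ln h2 - ln h1)"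
proof -
  define d where "d = h2 - h1"
  have d: "d \<ge> 0" using h12 by (simp add: d_def)
  define p where "p = sqrt (h1 - M)"
  define q where "q = sqrt (h2 - M)"
  have A: "h1 - M > 0" using M h1 by simp
  have p: "p > 0" using A by (simp add: p_def)
  have q: "q \<ge> p" using h12 by (simp add: p_def q_def)
  have qq: "q * q = h2 - M" using A h12 by (simp add: q_def)
  have e: "1 / p - 1 / q = d / (p * q * (p + q))"
    using inv_sqrt_diff[OF A d] by (simp add: p_def q_def d_def)
  have "p * q * (p + q) \<ge> p * (q * q)"
    using p q by (simp add: algebra_simps)
  moreover have "q * q \<ge> h2 / 2" using qq h1 h12 by simp
  ultimately have den: "p * q * (p + q) \<ge> p * (h2 / 2)"
    using p by (smt (verit) mult_left_mono)
  have h2p: "h2 > 0" using M h1 h12 by simp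
  have pL: "p \<ge> 2 * L / c"
  proof -
    have "sqrt ((2 * L / c)^2) \<le> p" unfolding p_def using h1(2) by (subst real_sqrt_le_iff) 
    then show ?thesis using L c by simp
  qed
  have "L * (1 / p - 1 / q) = L * d / (p * q * (p + q))" using e by simp
  also have "\<dots> \<le> L * d / (p * (h2 / 2))"
    using den p q h2p L d by (intro divide_left_mono) (auto intro!: mult_pos_pos)
  also have "\<dots> = (2 * L / p) * (d / h2)" using p h2p by (simp add: field_simps)
  also have "\<dots> \<le> c * (d / h2)"
  proof -
    have "2 * L / p \<le> c" using pL p c by (simp add: field_simps)
    then show ?thesis using d h2p by (intro mult_right_mono) auto
  qed
  also have "d / h2 \<le> ln h2 - ln h1"
  proof -
    have h1p: "h1 > 0" using M h1 by simp
    have "ln (h1 / h2) \<le> h1 / h2 - 1" using ln_le_minus_one h1p h2p by simp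
    then have "ln h1 - ln h2 \<le> h1 / h2 - 1" using ln_divide_pos h1p h2p by simp
    moreover have "d / h2 = 1 - h1 / h2" using h2p by (simp add: d_def field_simps)
    ultimately show ?thesis by simp
  qed
  then have "c * (d / h2) \<le> c * (ln h2 - ln h1)" by (rule mult_left_mono) (use c in simp)
  finally show ?thesis by (simp add: p_def q_def)
qed




context pot2
begin

definition "M = max hstar V0"
definition "Fh h = (\<lambda>x. 1 / sqrt (h - W x))"
definition "Q h = integral {a..U} (Fh h)"
definition "P h = integral {- rho h..0} (ws h)"

lemma M_pos: "M > 0" unfolding M_def using hstar_pos by simp

lemma W_le_M: assumes "x \<le> U" shows "W x \<le> M"
proof (cases "x \<le> 0")
  case True then show ?thesis using W_le[OF True] unfolding M_def by simp
next
  case False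
  then have xp: "x > 0" by simp
  have "V x \<le> V U"
  proof (cases "x < U")
    case True then show ?thesis using V_strict[of x U] xp by simp
  next
    case False then show ?thesis using assms by simp
  qed
  then show ?thesis using W_eq[of x] xp a_neg unfolding M_def V0_def by simp
qed

lemma Fh_cont: assumes "h > M" shows "continuous_on {a..U} (Fh h)"
proof -
  have "\<forall>x\<in>{a..U}. sqrt (h - W x) \<noteq> 0"
    using W_le_M assms by (auto simp: less_le_not_le)
  then show ?thesis unfolding Fh_def by (intro continuous_intros W_cont) auto
qed

lemma piece1: assumes "h > M" shows "(Fh h has_integral Q h) {a..U}"
  unfolding Q_def using Fh_cont[OF assms] by (intro integrable_integral integrable_continuous_interval)

lemma Q_bound:
  assumes h1: "M < h1" and h12: "h1 \<le> h2"
  shows "Q h1 - Q h2 \<le> (U - a) * (1 / sqrt (h1 - M) - 1 / sqrt (h2 - M))"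
proof -
  have i1: "Fh h1 integrable_on {a..U}" using piece1[OF h1] by blast
  have i2: "Fh h2 integrable_on {a..U}" using piece1[of h2] h1 h12 by auto
  have "Q h1 - Q h2 = integral {a..U} (\<lambda>x. Fh h1 x - Fh h2 x)"
    unfolding Q_def using integral_diff[OF i1 i2] by simp
  also have "\<dots> \<le> integral {a..U} (\<lambda>x. 1 / sqrt (h1 - M) - 1 / sqrt (h2 - M))"
  proof (rule integral_le)
    show "(\<lambda>x. Fh h1 x - Fh h2 x) integrable_on {a..U}" using i1 i2 by (rule integrable_diff)
    show "(\<lambda>x. 1 / sqrt (h1 - M) - 1 / sqrt (h2 - M)) integrable_on {a..U}"
      by (intro integrable_continuous_interval continuous_intros)
    fix x assume "x \<in> {a..U}"
    then have "W x \<le> M" using W_le_M by simp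
    then show "Fh h1 x - Fh h2 x \<le> 1 / sqrt (h1 - M) - 1 / sqrt (h2 - M)"
      unfolding Fh_def by (rule pointwise1[OF _ h1 h12])
  qed
  also have "\<dots> = (U - a) * (1 / sqrt (h1 - M) - 1 / sqrt (h2 - M))"
    using a_neg U_ge by simp
  finally show ?thesis .
qed

lemma Tb_eq: assumes h: "h > M" shows "T_b a V h = sqrt 2 * (Q h + P h)"
proof -
  have hV0: "h > V0" using h unfolding M_def by simp
  have aU: "a \<le> U" using a_neg U_ge by simp
  have Uh: "U \<le> u_plus V h" using uplus_ge_U hV0 by simp
  have i2: "(Fh h has_integral P h) {U..u_plus V h}"
    unfolding Fh_def P_def using piece2[OF hV0] .
  have "(Fh h has_integral Q h + P h) {a..u_plus V h}"
    by (rule has_integral_combine[OF aU Uh piece1[OF h] i2])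
  then have "((\<lambda>u. 1 / sqrt (h - V u)) has_integral Q h + P h) {a..u_plus V h}"
  proof (rule has_integral_spike[OF negligible_sing[of a], rotated])
    fix x assume "x \<in> {a..u_plus V h} - {a}"
    then have "x > a" by auto
    then show "1 / sqrt (h - V x) = Fh h x" unfolding Fh_def using W_eq by simp
  qed
  then show ?thesis unfolding T_b_def by (simp add: integral_unique)
qed

lemma ws_Gf: assumes h: "h > V0" and s: "s \<in> {- rho h..0}"
  shows "ws h s = 2 * Gf (h * (1 - s^2)) / sqrt (1 - s^2)"
proof -
  have hp: "h > 0" using h V0_pos by simp
  have "h * (1 - s^2) > 0" using arg_bounds[OF h s] V0_pos by simp
  then have t: "1 - s^2 > 0" using hp by (simp add: zero_less_mult_iff)
  have "sqrt (h * (1 - s^2)) = sqrt h * sqrt (1 - s^2)" by (simp add: real_sqrt_mult)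
  then show ?thesis unfolding ws_def Gf_def gs_def using t by (simp add: field_simps)
qed

lemma rho_mono: assumes "V0 < h1" "h1 \<le> h2" shows "rho h1 \<le> rho h2"
proof -
  have "V0 / h2 \<le> V0 / h1" using assms V0_pos by (intro divide_left_mono) auto
  then show ?thesis unfolding rho_def by simp
qed

lemma P_bound:
  assumes h1: "2 * M \<le> h1" and h12: "h1 \<le> h2"
  shows "P h2 - P h1 \<ge> c0 * (ln h2 - ln h1)"
proof -
  have hV1: "h1 > V0" using h1 M_pos unfolding M_def by simp
  have hV2: "h2 > V0" using hV1 h12 by simp
  have h1p: "h1 > 0" using hV1 V0_pos by simp
  define Lg where "Lg = ln h2 - ln h1"
  have Lg: "Lg \<ge> 0" unfolding Lg_def using h1p h12 by simp
  have r12: "- rho h2 \<le> - rho h1" using rho_mono[OF hV1 h12] by simp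
  have r1: "- rho h1 \<le> 0" using rho_pos[OF hV1] by simp
  have half: "rho h1 \<ge> 1/2"
  proof -
    have "V0 / h1 \<le> 1/2" using h1 V0_pos h1p unfolding M_def by (simp add: field_simps)
    then have "1/4 \<le> 1 - V0 / h1" by linarith
    then have "sqrt (1/4) \<le> rho h1" unfolding rho_def by (subst real_sqrt_le_iff)
    moreover have "sqrt (1/4) = (1/2::real)" by (simp add: real_sqrt_divide)
    ultimately show ?thesis by simp
  qed
  have c2: "continuous_on {- rho h2..0} (ws h2)" using ws_cont[OF hV2] .
  have c2': "continuous_on {- rho h1..0} (ws h2)" using continuous_on_subset[OF c2] r12 by auto
  have c1: "continuous_on {- rho h1..0} (ws h1)" using ws_cont[OF hV1] .
  have "P h2 = integral {- rho h2..- rho h1} (ws h2) + integral {- rho h1..0} (ws h2)"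
    unfolding P_def using Henstock_Kurzweil_Integration.integral_combine[OF r12 r1 integrable_continuous_interval[OF c2]] by simp
  moreover have "integral {- rho h2..- rho h1} (ws h2) \<ge> 0"
  proof (rule integral_nonneg)
    show "ws h2 integrable_on {- rho h2..- rho h1}"
      using continuous_on_subset[OF c2] r1 by (intro integrable_continuous_interval) auto
    fix x assume "x \<in> {- rho h2..- rho h1}"
    then show "ws h2 x \<ge> 0" using ws_nonneg[OF hV2] r1 by auto
  qed
  moreover have "integral {- rho h1..0} (ws h2) \<ge> integral {- rho h1..0} (\<lambda>s. ws h1 s + 2 * c0 * Lg)"
  proof (rule integral_le)
    show "ws h2 integrable_on {- rho h1..0}" using c2' by (rule integrable_continuous_interval)
    show "(\<lambda>s. ws h1 s + 2 * c0 * Lg) integrable_on {- rho h1..0}"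
      using c1 by (intro integrable_continuous_interval continuous_intros)
    fix s assume s: "s \<in> {- rho h1..0}"
    have s2: "s \<in> {- rho h2..0}" using s r12 by auto
    define t where "t = sqrt (1 - s^2)"
    have v1: "h1 * (1 - s^2) \<ge> V0" using arg_bounds[OF hV1 s] by simp
    then have "0 < h1 * (1 - s^2)" using V0_pos by linarith
    then have om: "1 - s^2 > 0" using h1p by (simp add: zero_less_mult_iff)
    then have tp: "t > 0" unfolding t_def by simp
    have t1: "t \<le> 1" unfolding t_def using om by simp
    have v12: "h1 * (1 - s^2) \<le> h2 * (1 - s^2)" using h12 om by (simp add: mult_right_mono)
    have E: "Gf (h2 * (1 - s^2)) - Gf (h1 * (1 - s^2)) \<ge> c0 * (ln (h2 * (1 - s^2)) - ln (h1 * (1 - s^2)))"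
      by (rule E_mono[OF v1 v12])
    have "ln (h2 * (1 - s^2)) - ln (h1 * (1 - s^2)) = Lg"
      unfolding Lg_def using om h1p h12 by (simp add: ln_mult)
    with E have E': "Gf (h2 * (1 - s^2)) - Gf (h1 * (1 - s^2)) \<ge> c0 * Lg" by simp
    have "ws h2 s - ws h1 s = 2 * Gf (h2 * (1 - s^2)) / t - 2 * Gf (h1 * (1 - s^2)) / t"
      unfolding ws_Gf[OF hV1 s] ws_Gf[OF hV2 s2] t_def by (rule refl)
    also have "\<dots> = 2 * (Gf (h2 * (1 - s^2)) - Gf (h1 * (1 - s^2))) / t"
      by (simp only: diff_divide_distrib right_diff_distrib)
    also have "\<dots> \<ge> 2 * (c0 * Lg) / t"
      using E' tp by (intro divide_right_mono) auto
    also have "2 * (c0 * Lg) / t \<ge> 2 * (c0 * Lg)"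
    proof -
      have nn: "0 \<le> 2 * (c0 * Lg)" using c0_pos Lg by simp
      have "2 * (c0 * Lg) * t \<le> 2 * (c0 * Lg)" using mult_left_le[OF t1 nn] .
      then show ?thesis using tp by (simp only: le_divide_eq) simp
    qed
    finally show "ws h1 s + 2 * c0 * Lg \<le> ws h2 s" by simp
  qed
  moreover have "integral {- rho h1..0} (\<lambda>s. ws h1 s + 2 * c0 * Lg) = P h1 + rho h1 * (2 * c0 * Lg)"
  proof -
    have "integral {- rho h1..0} (\<lambda>s. ws h1 s + 2 * c0 * Lg) = integral {- rho h1..0} (ws h1) + integral {- rho h1..0} (\<lambda>s. 2 * c0 * Lg)"
      by (rule integral_add) (use c1 in \<open>auto intro: integrable_continuous_interval\<close>)
    then show ?thesis unfolding P_def using r1 by simp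
  qed
  moreover have "rho h1 * (2 * c0 * Lg) \<ge> c0 * Lg"
  proof -
    have "0 \<le> c0 * Lg" using c0_pos Lg by simp
    then have "(1/2) * (2 * (c0 * Lg)) \<le> rho h1 * (2 * (c0 * Lg))" using half by (intro mult_right_mono) auto
    then show ?thesis by simp
  qed
  ultimately show ?thesis unfolding Lg_def by linarith
qed

lemma main_mono: "\<exists>hbar > hstar. mono_on {hbar<..} (ext_period a hstar V)"
proof -
  define L where "L = U - a"
  have L: "L > 0" unfolding L_def using a_neg U_ge by simp
  define hbar where "hbar = 2 * M + (2 * L / c0)^2 + 1"
  have hb: "hbar > hstar" unfolding hbar_def M_def using hstar_pos
    by (smt (verit) zero_le_power2)
  have "mono_on {hbar<..} (ext_period a hstar V)"
  proof (rule mono_onI)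
    fix h1 h2 assume h1: "h1 \<in> {hbar<..}" and h2: "h2 \<in> {hbar<..}" and h12: "h1 \<le> h2"
    have sq: "(2 * L / c0)^2 \<ge> 0" by simp
    have hb1: "h1 > 2 * M + (2 * L / c0)^2 + 1" using h1 unfolding hbar_def by simp
    have h1a: "h1 \<ge> 2 * M" "h1 - M \<ge> (2 * L / c0)^2" "h1 > M"
      using hb1 M_pos sq by linarith+
    have h2M: "h2 > M" using h1a h12 by simp
    have e1: "ext_period a hstar V h1 = T_b a V h1" unfolding ext_period_def using h1 hb by simp
    have e2: "ext_period a hstar V h2 = T_b a V h2" unfolding ext_period_def using h2 hb by simp
    have "Q h1 - Q h2 \<le> L * (1 / sqrt (h1 - M) - 1 / sqrt (h2 - M))"
      using Q_bound[OF h1a(3) h12] unfolding L_def .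
    also have "\<dots> \<le> c0 * (ln h2 - ln h1)"
      by (rule final_ineq[OF M_pos c0_pos L h1a(1,2) h12])
    also have "\<dots> \<le> P h2 - P h1" by (rule P_bound[OF h1a(1) h12])
    finally have "Q h1 + P h1 \<le> Q h2 + P h2" by simp
    then have "sqrt 2 * (Q h1 + P h1) \<le> sqrt 2 * (Q h2 + P h2)" by simp
    then show "ext_period a hstar V h1 \<le> ext_period a hstar V h2"
      using e1 e2 Tb_eq[OF h1a(3)] Tb_eq[OF h2M] by simp
  qed
  then show ?thesis using hb by blast
qed

end


theorem lemma2p4:
  fixes V V' V'' :: "real \<Rightarrow> real" and a hstar \<beta> :: real
  assumes a_neg: "a < 0"
    and V_deriv: "\<And>u. a < u \<Longrightarrow> (V has_real_derivative V' u) (at u)"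
    and V'_deriv: "\<And>u. a < u \<Longrightarrow> (V' has_real_derivative V'' u) (at u)"
    and V''_cont: "continuous_on {a<..} V''"
    and lim_V_a: "(V \<longlongrightarrow> hstar) (at_right a)"
    and hstar_pos: "hstar > 0"
    and lim_V'_a: "filterlim V' at_bot (at_right a)"
    and V0: "V 0 = 0" and V'0: "V' 0 = 0" and V''0: "V'' 0 > 0"
    and sign: "\<And>u. a < u \<Longrightarrow> u \<noteq> 0 \<Longrightarrow> u * V' u > 0"
    and V_infty: "filterlim V at_top at_top"
    and beta_pos: "\<beta> > 0" and V_beta: "V \<beta> = hstar"
    and ell: "\<exists>l>0. eventually (\<lambda>u. 1 - 2 * V u * V'' u / (V' u)^2 \<ge> l) at_top"
    and ratio: "filterlim (\<lambda>u. u / V' u) at_top at_top"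
    and convex: "\<And>u. u > \<beta> \<Longrightarrow> V'' u > 0"
  shows "\<exists>hbar > hstar. mono_on {hbar<..} (ext_period a hstar V)"
proof -
  obtain l where l: "l > 0" and ev: "eventually (\<lambda>u. 1 - 2 * V u * V'' u / (V' u)^2 \<ge> l) at_top"
    using ell by blast
  then obtain N where N: "\<forall>u\<ge>N. 1 - 2 * V u * V'' u / (V' u)^2 \<ge> l"
    unfolding eventually_at_top_linorder by blast
  define U where "U = max N 1"
  have NU: "\<And>u. u \<ge> U \<Longrightarrow> 1 - 2 * V u * V'' u / (V' u)^2 \<ge> l"
    using N unfolding U_def by simp
  interpret pot2 V V' V'' a hstar l U
  proof unfold_locales
    show "a < 0" by (rule a_neg)
    show "\<And>u. a < u \<Longrightarrow> (V has_real_derivative V' u) (at u)" by (rule V_deriv)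
    show "\<And>u. a < u \<Longrightarrow> (V' has_real_derivative V'' u) (at u)" by (rule V'_deriv)
    show "(V \<longlongrightarrow> hstar) (at_right a)" by (rule lim_V_a)
    show "hstar > 0" by (rule hstar_pos)
    show "V 0 = 0" by (rule V0)
    show "\<And>u. a < u \<Longrightarrow> u \<noteq> 0 \<Longrightarrow> u * V' u > 0" by (rule sign)
    show "filterlim V at_top at_top" by (rule V_infty)
    show "l > 0" by (rule l)
    show "U \<ge> 1" unfolding U_def by simp
    show "\<And>u. u \<ge> U \<Longrightarrow> 1 - 2 * V u * V'' u / (V' u)^2 \<ge> l" by (rule NU)
  qed
  show ?thesis by (rule main_mono)
qed

end
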